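(* In the VI setting below, let $(u_k,\Delta_k)\subset\mathbb{R}^n\times(0,\infty)$ with $u_k\to u$ and $\Delta_k\to0$. Then there exists $K\in\mathbb{N}$ such that $\mathcal P(u_k,\Delta_k)\subseteq\mathcal B(u)$ and $\mathcal G(u_k,\Delta_k)\subseteq\partial_BS(u)$ for all $k\ge K$. In particular, $\sup_{G\in\mathcal G(u_k,\Delta_k)}\inf_{W\in\partial_BS(u)}\|G-W\|\to0$.
   Context: VI setting: $A\in\mathbb{R}^{n\times n}$ symmetric positive definite with smallest/largest eigenvalues $\lambda_{\min},\lambda_{\max}$; $\|v\|_1=\sum_i|v_i|$. For $u\in\mathbb{R}^n$, $S(u)=y$ is the unique solution of $\langle Ay,v-y\rangle+\|v\|_1-\|y\|_1\ge\langle u,v-y\rangle$ for all $v$; equivalently there is $q$ with $Ay+q=u$, $y_iq_i=|y_i|$, $|q_i|\le1$, and then $q=u-Ay$. $S$ is globally Lipschitz. Index sets (for $y=S(u)$, $q=u-Ay$): $\mathcal A_s(u)=\{i:|q_i|<1\}$, $\mathcal I(u)=\{i:y_i\neq0\}$, $\mathcal B(u)=\{i:y_i=0,|q_i|=1\}$. Let $L_y=1/\lambda_{\min}$, $L_q=\lambda_{\max}/\lambda_{\min}+1$. Possibly biactive indices: $\mathcal P(u,\Delta):=\{i: |y_i|<L_y\Delta \text{ and } ||q_i|-1|<L_q\Delta\}$. For $\mathcal N\subseteq\{1,\dots,n\}$: $A(\mathcal N)_{ij}=A_{ij}$ if $i,j\notin\mathcal N$, $A(\mathcal N)_{ij}=0$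 if $i\ne j$ and ($i\in\mathcal N$ or $j\in\mathcal N$), $A(\mathcal N)_{ii}=1$ if $i\in\mathcal N$; $\chi(\mathcal N)$ is diagonal with $\chi(\mathcal N)_{ii}=1$ for $i\notin\mathcal N$, $0$ otherwise. Define $\mathcal G(u,\Delta):=\{A(\mathcal A_s(u)\cup\mathcal B_0)^{-1}\chi(\mathcal A_s(u)\cup\mathcal B_0):\mathcal B_0\subseteq\mathcal P(u,\Delta)\}$. $\partial_BS(u)$: all limits $\lim_jS'(u_j)$ with $u_j\to u$ and $S$ differentiable at $u_j$. *)

theory Defs
  imports "HOL-Analysis.Analysis"
begin

type_synonym 'n vec = "real ^ 'n"
type_synonym 'n mat = "real ^ 'n ^ 'n"

definition sym_pos_def_mat :: "'n::finite mat \<Rightarrow> bool" where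
  "sym_pos_def_mat A \<longleftrightarrow> transpose A = A \<and> (\<forall>x. x \<noteq> 0 \<longrightarrow> x \<bullet> (A *v x) > 0)"

definition eigenvalues_mat :: "'n::finite mat \<Rightarrow> real set" where
  "eigenvalues_mat A = {c. \<exists>v. v \<noteq> 0 \<and> A *v v = c *\<^sub>R v}"

definition lam_min :: "'n::finite mat \<Rightarrow> real" where
  "lam_min A = Min (eigenvalues_mat A)"

definition lam_max :: "'n::finite mat \<Rightarrow> real" where
  "lam_max A = Max (eigenvalues_mat A)"

definition norm1 :: "'n::finite vec \<Rightarrow> real" where
  "norm1 v = (\<Sum>i\<in>UNIV. \<bar>v $ i\<bar>)"

text \<open>The variational inequality defining S(u).\<close>
definition VI_sol :: "'n::finite mat \<Rightarrow> 'n vec \<Rightarrow> 'n vec \<Rightarrow> bool" where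
  "VI_sol A u y \<longleftrightarrow>
     (\<forall>v. (A *v y) \<bullet> (v - y) + norm1 v - norm1 y \<ge> u \<bullet> (v - y))"

definition Ssol :: "'n::finite mat \<Rightarrow> 'n vec \<Rightarrow> 'n vec" where
  "Ssol A u = (THE y. VI_sol A u y)"

definition qmult :: "'n::finite mat \<Rightarrow> 'n vec \<Rightarrow> 'n vec" where
  "qmult A u = u - A *v Ssol A u"

definition strict_act :: "'n::finite mat \<Rightarrow> 'n vec \<Rightarrow> 'n set" where
  "strict_act A u = {i. \<bar>qmult A u $ i\<bar> < 1}"

definition inact :: "'n::finite mat \<Rightarrow> 'n vec \<Rightarrow> 'n set" where
  "inact A u = {i. Ssol A u $ i \<noteq> 0}"

definition biact :: "'n::finite mat \<Rightarrow> 'n vec \<Rightarrow> 'n set" where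
  "biact A u = {i. Ssol A u $ i = 0 \<and> \<bar>qmult A u $ i\<bar> = 1}"

definition L_y :: "'n::finite mat \<Rightarrow> real" where
  "L_y A = 1 / lam_min A"

definition L_q :: "'n::finite mat \<Rightarrow> real" where
  "L_q A = lam_max A / lam_min A + 1"

definition poss_biact :: "'n::finite mat \<Rightarrow> 'n vec \<Rightarrow> real \<Rightarrow> 'n set" where
  "poss_biact A u d = {i. \<bar>Ssol A u $ i\<bar> < L_y A * d \<and>
                               \<bar>\<bar>qmult A u $ i\<bar> - 1\<bar> < L_q A * d}"

definition A_red :: "'n::finite mat \<Rightarrow> 'n set \<Rightarrow> 'n mat" where
  "A_red A N = (\<chi> i j. if i \<notin> N \<and> j \<notin> N then A $ i $ j
                        else if i = j then 1 else 0)"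

definition chi_mat :: "'n::finite set \<Rightarrow> 'n mat" where
  "chi_mat N = (\<chi> i j. if i = j \<and> i \<notin> N then 1 else 0)"

definition Gset :: "'n::finite mat \<Rightarrow> 'n vec \<Rightarrow> real \<Rightarrow> 'n mat set" where
  "Gset A u d = {matrix_inv (A_red A (strict_act A u \<union> B0)) ** chi_mat (strict_act A u \<union> B0)
                   | B0. B0 \<subseteq> poss_biact A u d}"

text \<open>Bouligand subdifferential: limits of Jacobians at points of differentiability.\<close>
definition bouligand :: "('n::finite vec \<Rightarrow> 'n vec) \<Rightarrow> 'n vec \<Rightarrow> 'n mat set" where
  "bouligand S u = {W. \<exists>uj :: nat \<Rightarrow> 'n vec. uj \<longlonglongrightarrow> u \<and> (\<forall>j. S differentiable (at (uj j))) \<and>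
        (\<lambda>j. matrix (frechet_derivative S (at (uj j)))) \<longlonglongrightarrow> W}"

end

theory Submission
  imports Defs
begin

lemma VI_alt: "VI_sol A u y \<longleftrightarrow> (\<forall>v. norm1 v - norm1 y \<ge> (u - A *v y) \<bullet> (v - y))"
  unfolding VI_sol_def by (simp add: inner_diff_left algebra_simps)

lemma comp_VI:
  assumes "\<forall>i. \<bar>q$i\<bar> \<le> 1 \<and> q$i * y$i = \<bar>y$i\<bar>" and "q = u - A *v y"
  shows "VI_sol A u y"
  unfolding VI_alt
proof
  fix v
  have "(u - A *v y) \<bullet> (v - y) = (\<Sum>i\<in>UNIV. q$i * v$i - q$i * y$i)"
    unfolding assms(2)[symmetric] by (simp add: inner_vec_def right_diff_distrib)
  also have "\<dots> \<le> (\<Sum>i\<in>UNIV. \<bar>v$i\<bar> - \<bar>y$i\<bar>)"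
  proof (rule sum_mono)
    fix i
    have "q$i * v$i \<le> \<bar>q$i\<bar> * \<bar>v$i\<bar>" by (metis abs_ge_self abs_mult)
    also have "\<dots> \<le> \<bar>v$i\<bar>" using assms(1) by (simp add: mult_left_le_one_le)
    finally show "q$i * v$i - q$i * y$i \<le> \<bar>v$i\<bar> - \<bar>y$i\<bar>" using assms(1) by simp
  qed
  also have "\<dots> = norm1 v - norm1 y" by (simp add: norm1_def sum_subtractf)
  finally show "norm1 v - norm1 y \<ge> (u - A *v y) \<bullet> (v - y)" .
qed

lemma norm1_axis: "norm1 (y + axis i s) = norm1 y - \<bar>y$i\<bar> + \<bar>y$i + s\<bar>"
proof -
  have "norm1 (y + axis i s) = \<bar>y$i + s\<bar> + (\<Sum>j\<in>UNIV-{i}. \<bar>y$j\<bar>)"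
    unfolding norm1_def by (subst sum.remove[of _ i]) (auto simp: axis_def intro!: sum.cong)
  moreover have "norm1 y = \<bar>y$i\<bar> + (\<Sum>j\<in>UNIV-{i}. \<bar>y$j\<bar>)"
    unfolding norm1_def by (subst sum.remove[of _ i]) auto
  ultimately show ?thesis by simp
qed

lemma VI_comp:
  assumes "VI_sol A u y"
  shows "\<bar>(u - A *v y)$i\<bar> \<le> 1 \<and> (u - A *v y)$i * y$i = \<bar>y$i\<bar>"
proof -
  define q where "q = u - A *v y"
  have H: "\<bar>y$i + s\<bar> - \<bar>y$i\<bar> \<ge> q$i * s" for s
  proof -
    have "norm1 (y + axis i s) - norm1 y \<ge> q \<bullet> (y + axis i s - y)"
      using assms unfolding VI_alt q_def by blast
    then show ?thesis by (simp add: norm1_axis inner_axis)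
  qed
  have a: "q$i \<le> 1" using H[of 1] by (simp add: abs_if split: if_splits)
  have b: "- q$i \<le> 1" using H[of "-1"] by (simp add: abs_if split: if_splits)
  have c: "q$i * y$i \<ge> \<bar>y$i\<bar>" using H[of "- y$i"] by simp
  have d: "q$i * y$i \<le> \<bar>y$i\<bar>"
  proof -
    have "q$i * y$i \<le> \<bar>q$i\<bar> * \<bar>y$i\<bar>" by (metis abs_ge_self abs_mult)
    also have "\<dots> \<le> \<bar>y$i\<bar>" using a b by (simp add: mult_left_le_one_le)
    finally show ?thesis .
  qed
  show ?thesis using a b c d unfolding q_def[symmetric] by auto
qed

lemma VI_mono:
  assumes "VI_sol A u1 y1" "VI_sol A u2 y2"
  shows "(y1 - y2) \<bullet> (A *v (y1 - y2)) \<le> (u1 - u2) \<bullet> (y1 - y2)"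
proof -
  have 1: "norm1 y2 - norm1 y1 \<ge> (u1 - A *v y1) \<bullet> (y2 - y1)" using assms(1) unfolding VI_alt by blast
  have 2: "norm1 y1 - norm1 y2 \<ge> (u2 - A *v y2) \<bullet> (y1 - y2)" using assms(2) unfolding VI_alt by blast
  have "(u1 - A *v y1) \<bullet> (y2 - y1) + (u2 - A *v y2) \<bullet> (y1 - y2)
     = (y1 - y2) \<bullet> (A *v (y1 - y2)) - (u1 - u2) \<bullet> (y1 - y2)"
    by (simp add: matrix_vector_mult_diff_distrib inner_diff_left inner_diff_right inner_commute algebra_simps)
  then show ?thesis using 1 2 by linarith
qed

lemma PD_coercive:
  assumes "sym_pos_def_mat A"
  shows "\<exists>c>0. \<forall>x. c * (norm x)^2 \<le> x \<bullet> (A *v x)"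
proof -
  have "\<exists>x\<in>sphere (0::real^'a) 1. \<forall>y\<in>sphere 0 1. x \<bullet> (A *v x) \<le> y \<bullet> (A *v y)"
    by (rule continuous_attains_inf) (auto intro!: continuous_intros simp: sphere_eq_empty)
  then obtain x0 where x0: "norm x0 = 1" "\<And>y. norm y = 1 \<Longrightarrow> x0 \<bullet> (A *v x0) \<le> y \<bullet> (A *v y)"
    by auto
  define c where "c = x0 \<bullet> (A *v x0)"
  have "x0 \<noteq> 0" using x0 by auto
  then have cpos: "c > 0" using assms unfolding sym_pos_def_mat_def c_def by auto
  have "c * (norm x)^2 \<le> x \<bullet> (A *v x)" for x
  proof (cases "x = 0")
    case True then show ?thesis by simp
  next
    case False
    define z where "z = (1 / norm x) *\<^sub>R x"
    have "norm z = 1" using False by (simp add: z_def)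
    then have "c \<le> z \<bullet> (A *v z)" using x0 c_def by auto
    also have "\<dots> = (x \<bullet> (A *v x)) / (norm x)^2"
      by (simp add: z_def matrix_vector_mult_scaleR power2_eq_square)
    finally show ?thesis using False by (simp add: field_simps)
  qed
  then show ?thesis using cpos by blast
qed

lemma sym_inner:
  assumes "sym_pos_def_mat A"
  shows "x \<bullet> (A *v y) = (A *v x) \<bullet> y"
proof -
  have "x \<bullet> (A *v y) = (x v* A) \<bullet> y" by (simp add: dot_lmul_matrix)
  also have "x v* A = A *v x" using assms
    by (metis sym_pos_def_mat_def transpose_matrix_vector)
  finally show ?thesis .
qed

lemma norm1_convex:
  assumes "0 \<le> s" "s \<le> 1"
  shows "norm1 ((1 - s) *\<^sub>R y + s *\<^sub>R v) \<le> (1 - s) * norm1 y + s * norm1 v"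
proof -
  have "norm1 ((1 - s) *\<^sub>R y + s *\<^sub>R v) = (\<Sum>i\<in>UNIV. \<bar>(1 - s) * y$i + s * v$i\<bar>)"
    by (simp add: norm1_def)
  also have "\<dots> \<le> (\<Sum>i\<in>UNIV. (1 - s) * \<bar>y$i\<bar> + s * \<bar>v$i\<bar>)"
  proof (rule sum_mono)
    fix i
    have "\<bar>(1 - s) * y$i + s * v$i\<bar> \<le> \<bar>(1 - s) * y$i\<bar> + \<bar>s * v$i\<bar>" by (rule abs_triangle_ineq)
    also have "\<dots> = (1 - s) * \<bar>y$i\<bar> + s * \<bar>v$i\<bar>" using assms by (simp add: abs_mult)
    finally show "\<bar>(1 - s) * y$i + s * v$i\<bar> \<le> (1 - s) * \<bar>y$i\<bar> + s * \<bar>v$i\<bar>" .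
  qed
  also have "\<dots> = (1 - s) * norm1 y + s * norm1 v"
    by (simp add: norm1_def sum.distrib sum_distrib_left)
  finally show ?thesis .
qed

lemma norm1_nonneg: "norm1 y \<ge> 0"
  unfolding norm1_def by (simp add: sum_nonneg)

lemma VI_exists:
  assumes PD: "sym_pos_def_mat A"
  shows "\<exists>y. VI_sol A u y"
proof -
  obtain c where c: "c > 0" "\<And>x. c * (norm x)^2 \<le> x \<bullet> (A *v x)"
    using PD_coercive[OF PD] by blast
  define f where "f y = (y \<bullet> (A *v y)) / 2 + norm1 y - u \<bullet> y" for y
  define R where "R = 2 * norm u / c + 1"
  have "2 * norm u / c \<ge> 0" using c by simp
  then have Rpos: "R > 0" by (simp add: R_def)
  have cont: "continuous_on (cball 0 R) f"
    unfolding f_def norm1_def by (intro continuous_intros) auto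
  obtain y0 where y0: "y0 \<in> cball 0 R" "\<And>y. y \<in> cball 0 R \<Longrightarrow> f y0 \<le> f y"
    using continuous_attains_inf[OF compact_cball _ cont] Rpos by fastforce
  have f0: "f 0 = 0" by (simp add: f_def norm1_def)
  have fpos: "f y > 0" if "norm y > R" for y
  proof -
    have ny: "norm y > 2 * norm u / c" using that R_def by simp
    have "c * (norm y)^2 / 2 - norm u * norm y \<le> f y"
    proof -
      have "u \<bullet> y \<le> norm u * norm y" by (rule norm_cauchy_schwarz)
      then show ?thesis using c(2)[of y] norm1_nonneg[of y] unfolding f_def by linarith
    qed
    moreover have "c * (norm y)^2 / 2 - norm u * norm y = norm y * (c * norm y / 2 - norm u)"
      by (simp add: power2_eq_square algebra_simps)
    moreover have "c * norm y / 2 - norm u > 0"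
      using ny c(1) by (simp add: field_simps)
    moreover have "norm y > 0" using that Rpos by linarith
    ultimately show ?thesis by (metis mult_pos_pos order_less_le_trans)
  qed
  have ymin: "f y0 \<le> f y" for y
  proof (cases "y \<in> cball 0 R")
    case True then show ?thesis using y0 by blast
  next
    case False
    then have "f y > 0" using fpos by simp
    moreover have "f y0 \<le> f 0" using y0 Rpos by simp
    ultimately show ?thesis using f0 by simp
  qed
  have "VI_sol A u y0"
    unfolding VI_sol_def
  proof
    fix v
    define w where "w = v - y0"
    define B where "B = (A *v y0) \<bullet> w + norm1 v - norm1 y0 - u \<bullet> w"
    define K where "K = w \<bullet> (A *v w)"
    have key: "B + s * K / 2 \<ge> 0" if s: "0 < s" "s \<le> 1" for s
    proof -
      have e: "y0 + s *\<^sub>R w = (1 - s) *\<^sub>R y0 + s *\<^sub>R v" by (simp add: w_def algebra_simps)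
      have n: "norm1 (y0 + s *\<^sub>R w) \<le> (1 - s) * norm1 y0 + s * norm1 v"
        unfolding e using s by (intro norm1_convex) auto
      have q: "(y0 + s *\<^sub>R w) \<bullet> (A *v (y0 + s *\<^sub>R w))
          = y0 \<bullet> (A *v y0) + 2 * s * ((A *v y0) \<bullet> w) + s^2 * K"
        using sym_inner[OF PD, of y0 w]
        by (simp add: K_def matrix_vector_right_distrib matrix_vector_mult_scaleR inner_add_left
            inner_add_right inner_commute power2_eq_square algebra_simps)
      have "f y0 \<le> f (y0 + s *\<^sub>R w)" by (rule ymin)
      moreover have "f (y0 + s *\<^sub>R w) = y0 \<bullet> (A *v y0) / 2 + s * ((A *v y0) \<bullet> w) + s^2 * K / 2
          + norm1 (y0 + s *\<^sub>R w) - u \<bullet> y0 - s * (u \<bullet> w)"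
        unfolding f_def q by (simp add: inner_add_right add_divide_distrib)
      moreover have "s * B = s * ((A *v y0) \<bullet> w) + s * norm1 v - s * norm1 y0 - s * (u \<bullet> w)"
        unfolding B_def by (simp add: algebra_simps)
      moreover have "f y0 = y0 \<bullet> (A *v y0) / 2 + norm1 y0 - u \<bullet> y0" by (simp add: f_def)
      moreover have "norm1 (y0 + s *\<^sub>R w) \<le> norm1 y0 - s * norm1 y0 + s * norm1 v"
        using n by (simp add: algebra_simps)
      ultimately have "0 \<le> s * B + s^2 * K / 2"
        by linarith
      then have "0 \<le> s * (B + s * K / 2)" by (simp add: power2_eq_square algebra_simps)
      then show ?thesis using s by (simp add: zero_le_mult_iff)
    qed
    have "B \<ge> 0"
    proof (rule ccontr)
      assume neg: "\<not> B \<ge> 0"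
      show False
      proof (cases "K \<le> 0")
        case True then show False using key[of 1] neg by simp
      next
        case False
        define s where "s = min 1 (- B / K)"
        have "0 < s" "s \<le> 1" using neg False by (auto simp: s_def divide_neg_pos)
        moreover have "s * K \<le> - B" using False by (simp add: s_def min_def field_simps split: if_splits)
        ultimately show False using key[of s] neg by linarith
      qed
    qed
    then show "(A *v y0) \<bullet> (v - y0) + norm1 v - norm1 y0 \<ge> u \<bullet> (v - y0)"
      unfolding B_def w_def by linarith
  qed
  then show ?thesis by blast
qed

lemma VI_unique:
  assumes PD: "sym_pos_def_mat A" and "VI_sol A u y1" "VI_sol A u y2"
  shows "y1 = y2"
proof -
  have "(y1 - y2) \<bullet> (A *v (y1 - y2)) \<le> 0" using VI_mono[OF assms(2,3)] by simp
  then show ?thesis using PD unfolding sym_pos_def_mat_def by (metis eq_iff_diff_eq_0 not_le)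
qed

lemma Ssol_eq:
  assumes PD: "sym_pos_def_mat A" and "VI_sol A u y"
  shows "Ssol A u = y"
  unfolding Ssol_def using assms VI_unique by blast

lemma Ssol_VI:
  assumes PD: "sym_pos_def_mat A"
  shows "VI_sol A u (Ssol A u)"
  using VI_exists[OF PD] Ssol_eq[OF PD] by metis

lemma Ssol_comp:
  assumes PD: "sym_pos_def_mat A"
  shows "\<bar>qmult A u $ i\<bar> \<le> 1 \<and> qmult A u $ i * Ssol A u $ i = \<bar>Ssol A u $ i\<bar>"
  unfolding qmult_def using VI_comp[OF Ssol_VI[OF PD]] by blast

lemma Ssol_lip:
  assumes PD: "sym_pos_def_mat A"
  shows "\<exists>c>0. \<forall>u1 u2. c * norm (Ssol A u1 - Ssol A u2) \<le> norm (u1 - u2)"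
proof -
  obtain c where c: "c > 0" "\<And>x. c * (norm x)^2 \<le> x \<bullet> (A *v x)"
    using PD_coercive[OF PD] by blast
  have "c * norm (Ssol A u1 - Ssol A u2) \<le> norm (u1 - u2)" for u1 u2
  proof -
    define d where "d = Ssol A u1 - Ssol A u2"
    have "c * (norm d)^2 \<le> (u1 - u2) \<bullet> d"
      using c(2)[of d] VI_mono[OF Ssol_VI[OF PD] Ssol_VI[OF PD], of u1 u2] unfolding d_def by linarith
    also have "\<dots> \<le> norm (u1 - u2) * norm d" by (rule norm_cauchy_schwarz)
    finally have "norm d * (c * norm d) \<le> norm d * norm (u1 - u2)"
      by (simp add: power2_eq_square algebra_simps)
    then show ?thesis
      by (cases "norm d = 0") (auto simp: d_def c(1))
  qed
  then show ?thesis using c(1) by blast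
qed

lemma Ssol_tendsto:
  assumes PD: "sym_pos_def_mat A" and "uk \<longlonglongrightarrow> u"
  shows "(\<lambda>k. Ssol A (uk k)) \<longlonglongrightarrow> Ssol A u"
proof -
  obtain c where c: "c > 0" "\<And>u1 u2. c * norm (Ssol A u1 - Ssol A u2) \<le> norm (u1 - u2)"
    using Ssol_lip[OF PD] by blast
  have "(\<lambda>k. norm (uk k - u) / c) \<longlonglongrightarrow> 0 / c"
    using assms(2) c(1) by (intro tendsto_intros) (auto simp add: LIM_zero tendsto_norm_zero)
  then have "(\<lambda>k. norm (uk k - u) / c) \<longlonglongrightarrow> 0" by simp
  moreover have "norm (Ssol A (uk k) - Ssol A u) \<le> norm (uk k - u) / c" for k
    using c(2)[of "uk k" u] c(1) by (simp add: field_simps)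
  ultimately show ?thesis
    by (metis (no_types, lifting) LIM_zero_cancel Lim_null_comparison always_eventually)
qed

lemma g_deriv: "((\<lambda>v. yy + (M::real^'n::finite^'n) *v (v - xx)) has_derivative (\<lambda>h. M *v h)) (at xx)"
proof -
  have b: "bounded_linear ((*v) M)" by (rule matrix_vector_mul_bounded_linear)
  have "((\<lambda>v. M *v v) has_derivative (\<lambda>h. M *v h)) (at xx)" using b by (rule bounded_linear.has_derivative) (rule has_derivative_ident)
  then have "((\<lambda>v. M *v v + (yy - M *v xx)) has_derivative (\<lambda>h. M *v h)) (at xx)"
    by (rule has_derivative_add_const)
  then show ?thesis by (simp add: matrix_vector_mult_diff_distrib algebra_simps)
qed

lemma q_cont: "isCont (\<lambda>v. (v - (A::real^'n::finite^'n) *v (yy + (M::real^'n^'n) *v (v - xx))) $ i) xx"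
proof -
  have e: "(\<lambda>v. (v - A *v (yy + M *v (v - xx)))) = (\<lambda>v. v - (A ** M) *v v + ((A ** M) *v xx - A *v yy))"
    by (auto simp: matrix_vector_mult_diff_distrib matrix_vector_right_distrib matrix_vector_mul_assoc)
  have c1: "isCont ((*v) (A ** M)) x" for x 
    by (simp add: matrix_vector_mul_bounded_linear linear_continuous_at)
  have "isCont (\<lambda>v. (v - A *v (yy + M *v (v - xx)))) xx" unfolding e
    by (intro continuous_add continuous_diff continuous_const continuous_ident c1)
  then show ?thesis by (rule continuous_component)
qed

lemma d_cont: "isCont (\<lambda>v. ((M::real^'n::finite^'n) *v (v - xx)) $ i) xx"
proof -
  have c1: "isCont ((*v) M) x" for x 
    by (simp add: matrix_vector_mul_bounded_linear linear_continuous_at)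
  have "isCont (\<lambda>v. M *v v - M *v xx) xx"
    by (intro continuous_diff continuous_const c1)
  then have "isCont (\<lambda>v. M *v (v - xx)) xx" by (simp add: matrix_vector_mult_diff_distrib)
  then show ?thesis by (rule continuous_component)
qed

lemma sum_delta_mult: "(\<Sum>j\<in>UNIV. (if i = j then 1 else 0) * (f j::real)) = f (i::'n::finite)"
proof -
  have "(\<Sum>j\<in>UNIV. (if i = j then 1 else 0) * (f j::real)) = (\<Sum>j\<in>UNIV. if i = j then f j else 0)"
    by (rule sum.cong) auto
  then show ?thesis by (simp add: sum.delta')
qed

lemma A_red_mult:
  "(A_red A N *v x) $ i = (if i \<in> N then x$i else (\<Sum>j\<in>UNIV. if j \<notin> N then A$i$j * x$j else 0))"
proof (cases "i \<in> N")
  case True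
  show ?thesis
    unfolding matrix_vector_mult_def A_red_def using True by (simp add: sum_delta_mult)
next
  case False
  then show ?thesis
    unfolding matrix_vector_mult_def A_red_def by (auto intro!: sum.cong)
qed

lemma chi_mult: "(chi_mat N *v w) $ i = (if i \<in> N then 0 else w $ i)"
proof -
  show ?thesis
    unfolding matrix_vector_mult_def chi_mat_def by (simp add: sum_delta_mult)
qed

lemma A_red_invertible:
  assumes PD: "sym_pos_def_mat A"
  shows "invertible (A_red A N)"
proof -
  have "x = 0" if x: "A_red A N *v x = 0" for x
  proof -
    have xN: "x$i = 0" if "i \<in> N" for i
      using arg_cong[OF x, of "\<lambda>z. z$i"] that by (simp add: A_red_mult)
    have Ax: "(A *v x)$i = 0" if "i \<notin> N" for i
    proof -
      have "(A *v x)$i = (\<Sum>j\<in>UNIV. if j \<notin> N then A$i$j * x$j else 0)"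
        unfolding matrix_vector_mult_def using xN by (auto intro!: sum.cong)
      also have "\<dots> = 0" using arg_cong[OF x, of "\<lambda>z. z$i"] that by (simp add: A_red_mult)
      finally show ?thesis .
    qed
    have z: "x$i * (A *v x)$i = 0" for i using xN Ax by (metis mult_zero_left mult_zero_right)
    have "x \<bullet> (A *v x) = 0"
      unfolding inner_vec_def by (simp add: z)
    then show ?thesis using PD unfolding sym_pos_def_mat_def by force
  qed
  then show ?thesis
    using invertible_left_inverse matrix_left_invertible_ker by blast
qed

lemma matrix_inv_right:
  assumes "invertible M" shows "M ** matrix_inv M = mat 1"
proof -
  have "\<exists>A'. M ** A' = mat 1 \<and> A' ** M = mat 1" using assms by (simp add: invertible_def)
  then show ?thesis unfolding matrix_inv_def by (rule someI2_ex) blast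
qed

lemma yq_abs: "\<forall>i. \<bar>q0$i\<bar> \<le> 1 \<and> q0$i * y0$i = \<bar>y0$i\<bar> \<Longrightarrow> \<bar>y0$i\<bar> = \<bar>q0$i\<bar> * \<bar>(y0::real^'n::finite)$i\<bar>"
proof -
  assume "\<forall>i. \<bar>q0$i\<bar> \<le> 1 \<and> q0$i * y0$i = \<bar>y0$i\<bar>"
  then have "q0$i * y0$i = \<bar>y0$i\<bar>" by blast
  then have "\<bar>q0$i * y0$i\<bar> = \<bar>y0$i\<bar>" by simp
  then show ?thesis by (simp add: abs_mult)
qed

lemma local_affine:
  assumes PD: "sym_pos_def_mat A"
    and comp: "\<forall>i. \<bar>q0$i\<bar> \<le> 1 \<and> q0$i * y0$i = \<bar>y0$i\<bar>"
    and q0: "q0 = x0 - A *v y0"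
    and inN: "\<forall>i. i \<in> N \<longrightarrow> \<bar>q0$i\<bar> < 1"
    and notN: "\<forall>i. i \<notin> N \<longrightarrow> y0$i \<noteq> 0"
  shows "(Ssol A has_derivative (\<lambda>h. (matrix_inv (A_red A N) ** chi_mat N) *v h)) (at x0)"
proof -
  define M where "M = matrix_inv (A_red A N) ** chi_mat N"
  define g where "g v = y0 + M *v (v - x0)" for v
  have AM: "A_red A N *v (M *v w) = chi_mat N *v w" for w
    using matrix_inv_right[OF A_red_invertible[OF PD]]
    by (simp add: M_def matrix_vector_mul_assoc matrix_mul_assoc)
  have dN: "(M *v w)$i = 0" if "i \<in> N" for w i
    using arg_cong[OF AM[of w], of "\<lambda>z. z$i"] that by (simp add: A_red_mult chi_mult)
  have dA: "(A *v (M *v w))$i = w$i" if "i \<notin> N" for w i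
  proof -
    have "(A *v (M *v w))$i = (\<Sum>j\<in>UNIV. if j \<notin> N then A$i$j * (M *v w)$j else 0)"
      unfolding matrix_vector_mult_def[of A] using dN by (auto intro!: sum.cong)
    also have "\<dots> = w$i" using arg_cong[OF AM[of w], of "\<lambda>z. z$i"] that by (simp add: A_red_mult chi_mult)
    finally show ?thesis .
  qed
  have y0N: "y0$i = 0" if "i \<in> N" for i
  proof (rule ccontr)
    assume "y0$i \<noteq> 0"
    have "\<bar>y0$i\<bar> = \<bar>q0$i\<bar> * \<bar>y0$i\<bar>" using yq_abs[OF comp] .
    moreover have "\<bar>q0$i\<bar> * \<bar>y0$i\<bar> < 1 * \<bar>y0$i\<bar>"
      using inN that \<open>y0$i \<noteq> 0\<close> by (intro mult_strict_right_mono) auto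
    ultimately show False by linarith
  qed
  have q1: "\<bar>q0$i\<bar> = 1" if "i \<notin> N" for i
  proof -
    have "\<bar>y0$i\<bar> = \<bar>q0$i\<bar> * \<bar>y0$i\<bar>" using yq_abs[OF comp] .
    then show ?thesis using notN that by simp
  qed
  define P where "P v \<longleftrightarrow> (\<forall>i. (i \<in> N \<longrightarrow> \<bar>(v - A *v g v)$i\<bar> < 1) \<and>
                              (i \<notin> N \<longrightarrow> \<bar>(M *v (v - x0))$i\<bar> < \<bar>y0$i\<bar>))" for v
  have Pg: "Ssol A v = g v" if "P v" for v
  proof (rule Ssol_eq[OF PD], rule comp_VI[of "v - A *v g v"])
    show "v - A *v g v = v - A *v g v" ..
    show "\<forall>i. \<bar>(v - A *v g v) $ i\<bar> \<le> 1 \<and> (v - A *v g v) $ i * g v $ i = \<bar>g v $ i\<bar>"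
    proof
      fix i
      show "\<bar>(v - A *v g v) $ i\<bar> \<le> 1 \<and> (v - A *v g v) $ i * g v $ i = \<bar>g v $ i\<bar>"
      proof (cases "i \<in> N")
        case True
        then have "g v $ i = 0" using y0N dN by (simp add: g_def)
        then show ?thesis using True \<open>P v\<close> unfolding P_def by force
      next
        case False
        have qi: "(v - A *v g v)$i = q0$i"
          using dA[OF False, of "v - x0"] unfolding g_def q0
          by (simp add: matrix_vector_right_distrib)
        have gi: "g v $ i = y0$i + (M *v (v - x0))$i" by (simp add: g_def)
        have small: "\<bar>(M *v (v - x0))$i\<bar> < \<bar>y0$i\<bar>" using False \<open>P v\<close> unfolding P_def by blast
        have "q0$i = 1 \<or> q0$i = -1" using q1[OF False] by linarith
        moreover have ci: "q0$i * y0$i = \<bar>y0$i\<bar>" using comp by blast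
        ultimately have "q0$i * g v $ i = \<bar>g v $ i\<bar>"
          using small unfolding gi by (auto simp: abs_if split: if_splits)
        then show ?thesis using qi q1[OF False] by simp
      qed
    qed
  qed
  have "eventually P (at x0)"
    unfolding P_def
  proof (intro eventually_all_finite allI eventually_conj)
    fix i
    show "\<forall>\<^sub>F v in at x0. i \<in> N \<longrightarrow> \<bar>(v - A *v g v) $ i\<bar> < 1"
    proof (cases "i \<in> N")
      case True
      have "((\<lambda>v. (v - A *v g v) $ i) \<longlongrightarrow> q0 $ i) (at x0)"
        using q_cont[where A=A and yy=y0 and M=M and xx=x0 and i=i] unfolding isCont_def g_def q0 by simp
      then have "((\<lambda>v. \<bar>(v - A *v g v) $ i\<bar>) \<longlongrightarrow> \<bar>q0 $ i\<bar>) (at x0)" by (rule tendsto_rabs)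
      from order_tendstoD(2)[OF this] inN True show ?thesis by (auto elim: eventually_mono)
    qed simp
    show "\<forall>\<^sub>F v in at x0. i \<notin> N \<longrightarrow> \<bar>(M *v (v - x0)) $ i\<bar> < \<bar>y0 $ i\<bar>"
    proof (cases "i \<in> N")
      case False
      have "((\<lambda>v. (M *v (v - x0)) $ i) \<longlongrightarrow> 0) (at x0)"
        using d_cont[where M=M and xx=x0 and i=i] unfolding isCont_def by simp
      then have "((\<lambda>v. \<bar>(M *v (v - x0)) $ i\<bar>) \<longlongrightarrow> \<bar>0\<bar>) (at x0)" by (rule tendsto_rabs)
      from order_tendstoD(2)[OF this, of "\<bar>y0$i\<bar>"] notN False show ?thesis by (auto elim: eventually_mono)
    qed simp
  qed
  moreover have "P x0" unfolding P_def g_def using inN notN q0 by auto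
  ultimately have "eventually P (nhds x0)" by (simp add: eventually_nhds_conv_at)
  then obtain S where S: "open S" "x0 \<in> S" "\<And>v. v \<in> S \<Longrightarrow> P v" unfolding eventually_nhds by blast
  show ?thesis unfolding M_def[symmetric]
    by (rule has_derivative_transform_within_open[OF g_deriv[where yy=y0 and M=M and xx=x0, folded g_def] S(1,2)])
       (simp add: Pg S(3))
qed

lemma bouligand_mem:
  assumes PD: "sym_pos_def_mat A"
    and N1: "strict_act A u \<subseteq> N" and N2: "N \<subseteq> strict_act A u \<union> biact A u"
  shows "matrix_inv (A_red A N) ** chi_mat N \<in> bouligand (Ssol A) u"
proof -
  define y where "y = Ssol A u"
  define q where "q = qmult A u"
  have comp: "\<bar>q$i\<bar> \<le> 1 \<and> q$i * y$i = \<bar>y$i\<bar>" for i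
    unfolding q_def y_def using Ssol_comp[OF PD] by blast
  have qy: "q = u - A *v y" unfolding q_def y_def qmult_def ..
  define d :: "real^'a" where "d = (\<chi> i. if i \<notin> N \<and> y$i = 0 then q$i else 0)"
  define e :: "real^'a" where "e = (\<chi> i. if i \<in> N \<and> \<bar>q$i\<bar> = 1 then - q$i else 0)"
  define h where "h = A *v d + e"
  define t :: "nat \<Rightarrow> real" where "t j = 1 / (2 + real j)" for j
  define uj where "uj j = u + t j *\<^sub>R h" for j
  define M where "M = matrix_inv (A_red A N) ** chi_mat N"
  have tpos: "0 < t j" "t j < 1" for j by (auto simp: t_def)
  have deriv: "(Ssol A has_derivative (\<lambda>v. M *v v)) (at (uj j))" for j
  proof -
    define yj where "yj = y + t j *\<^sub>R d"
    define qj where "qj = q + t j *\<^sub>R e"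
    have qj: "qj = uj j - A *v yj"
      unfolding qj_def uj_def yj_def h_def qy
      by (simp add: matrix_vector_right_distrib matrix_vector_mult_scaleR algebra_simps)
    have all: "(\<bar>qj$i\<bar> \<le> 1 \<and> qj$i * yj$i = \<bar>yj$i\<bar>) \<and> (i \<in> N \<longrightarrow> \<bar>qj$i\<bar> < 1) \<and> (i \<notin> N \<longrightarrow> yj$i \<noteq> 0)" for i
    proof (cases "i \<in> N")
      case True
      have y0: "y$i = 0"
      proof (cases "\<bar>q$i\<bar> < 1")
        case True
        have "\<bar>y$i\<bar> = \<bar>q$i\<bar> * \<bar>y$i\<bar>" using comp[of i] by (metis abs_abs abs_mult)
        moreover have "\<bar>y$i\<bar> \<noteq> 0 \<Longrightarrow> \<bar>q$i\<bar> * \<bar>y$i\<bar> < 1 * \<bar>y$i\<bar>"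
          using True by (intro mult_strict_right_mono) auto
        ultimately show ?thesis by fastforce
      next
        case False
        then have "i \<in> biact A u" using N2 \<open>i \<in> N\<close> by (auto simp: strict_act_def q_def)
        then show ?thesis by (simp add: biact_def y_def)
      qed
      have yj0: "yj$i = 0" using True y0 by (simp add: yj_def d_def)
      have "\<bar>qj$i\<bar> < 1"
      proof (cases "\<bar>q$i\<bar> = 1")
        case True
        have "qj$i = (1 - t j) * q$i" using \<open>i \<in> N\<close> True by (simp add: qj_def e_def algebra_simps)
        then have "\<bar>qj$i\<bar> = (1 - t j)" using True tpos[of j] by (simp add: abs_mult)
        then show ?thesis using tpos[of j] by simp
      next
        case False
        then show ?thesis using comp[of i] by (simp add: qj_def e_def)
      qed
      then show ?thesis using yj0 True by simp
    next
      case False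
      have "i \<notin> strict_act A u" using N1 False by blast
      then have q1: "\<bar>q$i\<bar> = 1" using comp[of i] by (simp add: strict_act_def q_def)
      have qji: "qj$i = q$i" using False by (simp add: qj_def e_def)
      show ?thesis
      proof (cases "y$i = 0")
        case True
        have yji: "yj$i = t j * q$i" using False True by (simp add: yj_def d_def)
        have qq: "q$i * q$i = 1" using q1 by (metis abs_mult_self_eq mult_1_right)
        have "qj$i * yj$i = t j" unfolding qji yji using qq by (simp add: algebra_simps)
        moreover have "\<bar>yj$i\<bar> = t j" unfolding yji using q1 tpos[of j] by (simp add: abs_mult)
        moreover have "yj$i \<noteq> 0" unfolding yji using q1 tpos[of j] by auto
        ultimately show ?thesis using False q1 qji by simp
      next
        case nz: False
        have "yj$i = y$i" using False nz by (simp add: yj_def d_def)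
        then show ?thesis using comp[of i] qji False nz by simp
      qed
    qed
    show ?thesis unfolding M_def
      by (rule local_affine[OF PD _ qj]) (use all in blast)+
  qed
  have "uj \<longlonglongrightarrow> u"
  proof -
    have "t \<longlonglongrightarrow> 0" unfolding t_def
      by (intro tendsto_divide_0[OF tendsto_const] filterlim_at_top_imp_at_infinity
          filterlim_tendsto_add_at_top[OF tendsto_const filterlim_real_sequentially])
    then have "(\<lambda>j. u + t j *\<^sub>R h) \<longlonglongrightarrow> u + 0 *\<^sub>R h" by (intro tendsto_intros)
    then show ?thesis unfolding uj_def[abs_def] by simp
  qed
  moreover have "\<forall>j. Ssol A differentiable (at (uj j))"
    using deriv unfolding differentiable_def by blast
  moreover have "(\<lambda>j. matrix (frechet_derivative (Ssol A) (at (uj j)))) \<longlonglongrightarrow> M"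
  proof -
    have "matrix (frechet_derivative (Ssol A) (at (uj j))) = M" for j
      using frechet_derivative_at[OF deriv[of j]] matrix_of_matrix_vector_mul[of M] by simp
    then show ?thesis by simp
  qed
  ultimately show ?thesis unfolding bouligand_def M_def by blast
qed

theorem lemma4p4:
  fixes A :: "real ^ 'n::finite ^ 'n" and u :: "real ^ 'n"
    and uk :: "nat \<Rightarrow> real ^ 'n" and \<Delta> :: "nat \<Rightarrow> real"
  assumes "sym_pos_def_mat A"
    and "\<And>k. \<Delta> k > 0"
    and "uk \<longlonglongrightarrow> u"
    and "\<Delta> \<longlonglongrightarrow> 0"
  shows "(\<exists>K. \<forall>k\<ge>K. poss_biact A (uk k) (\<Delta> k) \<subseteq> biact A u \<and>
                      Gset A (uk k) (\<Delta> k) \<subseteq> bouligand (Ssol A) u)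
         \<and> (\<lambda>k. Sup ((\<lambda>G. Inf ((\<lambda>W. norm (G - W)) ` bouligand (Ssol A) u)) ` Gset A (uk k) (\<Delta> k)))
             \<longlonglongrightarrow> 0"
proof -
  note PD = assms(1)
  define y where "y = Ssol A u"
  define q where "q = qmult A u"
  define yk where "yk k = Ssol A (uk k)" for k
  define qk where "qk k = qmult A (uk k)" for k
  have yk_lim: "yk \<longlonglongrightarrow> y"
    unfolding yk_def[abs_def] y_def by (rule Ssol_tendsto[OF PD assms(3)])
  have qk_lim: "qk \<longlonglongrightarrow> q"
  proof -
    have "(\<lambda>k. A *v yk k) \<longlonglongrightarrow> A *v y"
      using yk_lim by (rule bounded_linear.tendsto[OF matrix_vector_mul_bounded_linear])
    then have "(\<lambda>k. uk k - A *v yk k) \<longlonglongrightarrow> u - A *v y"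
      using assms(3) by (intro tendsto_diff)
    then show ?thesis unfolding qk_def[abs_def] q_def qmult_def yk_def y_def .
  qed
  have ycomp: "\<bar>q$i\<bar> \<le> 1 \<and> q$i * y$i = \<bar>y$i\<bar>" for i
    unfolding q_def y_def using Ssol_comp[OF PD] by blast
  have ykcomp: "\<bar>qk k$i\<bar> \<le> 1 \<and> qk k$i * yk k$i = \<bar>yk k$i\<bar>" for i k
    unfolding qk_def yk_def using Ssol_comp[OF PD] by blast
  have yi: "(\<lambda>k. yk k $ i) \<longlonglongrightarrow> y $ i" for i using yk_lim by (rule tendsto_vec_nth)
  have qi: "(\<lambda>k. qk k $ i) \<longlonglongrightarrow> q $ i" for i using qk_lim by (rule tendsto_vec_nth)
  have ev: "eventually (\<lambda>k. \<forall>i.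
      (y$i \<noteq> 0 \<longrightarrow> \<bar>yk k$i\<bar> - L_y A * \<Delta> k > 0) \<and>
      (\<bar>q$i\<bar> \<noteq> 1 \<longrightarrow> \<bar>\<bar>qk k$i\<bar> - 1\<bar> - L_q A * \<Delta> k > 0) \<and>
      (y$i \<noteq> 0 \<longrightarrow> \<bar>yk k$i\<bar> > 0) \<and> (\<bar>q$i\<bar> < 1 \<longrightarrow> \<bar>qk k$i\<bar> < 1)) sequentially"
  proof (intro eventually_all_finite eventually_conj)
    fix i
    have l1: "(\<lambda>k. \<bar>yk k$i\<bar> - L_y A * \<Delta> k) \<longlonglongrightarrow> \<bar>y$i\<bar> - L_y A * 0"
      by (intro tendsto_intros yi assms(4))
    have l2: "(\<lambda>k. \<bar>\<bar>qk k$i\<bar> - 1\<bar> - L_q A * \<Delta> k) \<longlonglongrightarrow> \<bar>\<bar>q$i\<bar> - 1\<bar> - L_q A * 0"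
      by (intro tendsto_intros qi assms(4))
    have l3: "(\<lambda>k. \<bar>yk k$i\<bar>) \<longlonglongrightarrow> \<bar>y$i\<bar>"
      by (intro tendsto_intros yi)
    show "\<forall>\<^sub>F k in sequentially. y$i \<noteq> 0 \<longrightarrow> \<bar>yk k$i\<bar> - L_y A * \<Delta> k > 0"
    proof (cases "y$i = 0")
      case False
      then show ?thesis using order_tendstoD(1)[OF l1, of 0] by (auto elim: eventually_mono)
    qed simp
    show "\<forall>\<^sub>F k in sequentially. \<bar>q$i\<bar> \<noteq> 1 \<longrightarrow> \<bar>\<bar>qk k$i\<bar> - 1\<bar> - L_q A * \<Delta> k > 0"
    proof (cases "\<bar>q$i\<bar> = 1")
      case False
      then show ?thesis using order_tendstoD(1)[OF l2, of 0] by (auto elim: eventually_mono)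
    qed simp
    show "\<forall>\<^sub>F k in sequentially. y$i \<noteq> 0 \<longrightarrow> \<bar>yk k$i\<bar> > 0"
    proof (cases "y$i = 0")
      case False
      then show ?thesis using order_tendstoD(1)[OF l3, of 0] by (auto elim: eventually_mono)
    qed simp
    have l4: "(\<lambda>k. \<bar>qk k$i\<bar>) \<longlonglongrightarrow> \<bar>q$i\<bar>"
      by (intro tendsto_intros qi)
    show "\<forall>\<^sub>F k in sequentially. \<bar>q$i\<bar> < 1 \<longrightarrow> \<bar>qk k$i\<bar> < 1"
    proof (cases "\<bar>q$i\<bar> < 1")
      case True
      then show ?thesis using order_tendstoD(2)[OF l4, of 1] by (auto elim: eventually_mono)
    qed simp
  qed
  have main: "poss_biact A (uk k) (\<Delta> k) \<subseteq> biact A u \<and> Gset A (uk k) (\<Delta> k) \<subseteq> bouligand (Ssol A) u"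
    if H: "\<forall>i. (y$i \<noteq> 0 \<longrightarrow> \<bar>yk k$i\<bar> - L_y A * \<Delta> k > 0) \<and>
      (\<bar>q$i\<bar> \<noteq> 1 \<longrightarrow> \<bar>\<bar>qk k$i\<bar> - 1\<bar> - L_q A * \<Delta> k > 0) \<and>
      (y$i \<noteq> 0 \<longrightarrow> \<bar>yk k$i\<bar> > 0) \<and> (\<bar>q$i\<bar> < 1 \<longrightarrow> \<bar>qk k$i\<bar> < 1)" for k
  proof -
    have P: "poss_biact A (uk k) (\<Delta> k) \<subseteq> biact A u"
    proof
      fix i assume "i \<in> poss_biact A (uk k) (\<Delta> k)"
      then have a: "\<bar>yk k$i\<bar> < L_y A * \<Delta> k" and b: "\<bar>\<bar>qk k$i\<bar> - 1\<bar> < L_q A * \<Delta> k"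
        unfolding poss_biact_def yk_def qk_def by auto
      have "y$i = 0" using a H by force
      moreover have "\<bar>q$i\<bar> = 1" using b H by force
      ultimately show "i \<in> biact A u" unfolding biact_def y_def q_def by simp
    qed
    have G: "Gset A (uk k) (\<Delta> k) \<subseteq> bouligand (Ssol A) u"
    proof
      fix G assume "G \<in> Gset A (uk k) (\<Delta> k)"
      then obtain B0 where B0: "B0 \<subseteq> poss_biact A (uk k) (\<Delta> k)"
        and G: "G = matrix_inv (A_red A (strict_act A (uk k) \<union> B0)) ** chi_mat (strict_act A (uk k) \<union> B0)"
        unfolding Gset_def by blast
      have N1: "strict_act A u \<subseteq> strict_act A (uk k) \<union> B0"
      proof
        fix i assume i: "i \<in> strict_act A u"
        then have "\<bar>q$i\<bar> < 1" by (simp add: strict_act_def q_def)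
        then have "y$i = 0"
        proof -
          have "\<bar>y$i\<bar> = \<bar>q$i\<bar> * \<bar>y$i\<bar>" using ycomp[of i] by (metis abs_abs abs_mult)
          moreover have "\<bar>y$i\<bar> \<noteq> 0 \<Longrightarrow> \<bar>q$i\<bar> * \<bar>y$i\<bar> < 1 * \<bar>y$i\<bar>"
            using \<open>\<bar>q$i\<bar> < 1\<close> by (intro mult_strict_right_mono) auto
          ultimately show ?thesis by fastforce
        qed
        have "\<bar>qk k$i\<bar> < 1" using H \<open>\<bar>q$i\<bar> < 1\<close> by blast
        then show "i \<in> strict_act A (uk k) \<union> B0" by (simp add: strict_act_def qk_def)
      qed
      have N2: "strict_act A (uk k) \<union> B0 \<subseteq> strict_act A u \<union> biact A u"
      proof
        fix i assume i: "i \<in> strict_act A (uk k) \<union> B0"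
        show "i \<in> strict_act A u \<union> biact A u"
        proof (cases "i \<in> B0")
          case True then show ?thesis using B0 P by blast
        next
          case False
          then have "\<bar>qk k$i\<bar> < 1" using i by (simp add: strict_act_def qk_def)
          then have yk0: "yk k$i = 0"
          proof -
            have "\<bar>yk k$i\<bar> = \<bar>qk k$i\<bar> * \<bar>yk k$i\<bar>" using ykcomp[of k i] by (metis abs_abs abs_mult)
            moreover have "\<bar>yk k$i\<bar> \<noteq> 0 \<Longrightarrow> \<bar>qk k$i\<bar> * \<bar>yk k$i\<bar> < 1 * \<bar>yk k$i\<bar>"
              using \<open>\<bar>qk k$i\<bar> < 1\<close> by (intro mult_strict_right_mono) auto
            ultimately show ?thesis by fastforce
          qed
          then have "y$i = 0" using H by force
          then show ?thesis using ycomp[of i]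
            by (cases "\<bar>q$i\<bar> < 1") (auto simp: strict_act_def biact_def q_def y_def)
        qed
      qed
      show "G \<in> bouligand (Ssol A) u" unfolding G by (rule bouligand_mem[OF PD N1 N2])
    qed
    show ?thesis using P G by blast
  qed
  have part1: "\<exists>K. \<forall>k\<ge>K. poss_biact A (uk k) (\<Delta> k) \<subseteq> biact A u \<and>
                      Gset A (uk k) (\<Delta> k) \<subseteq> bouligand (Ssol A) u"
    using ev main unfolding eventually_sequentially by blast
  have zero: "Sup ((\<lambda>G. Inf ((\<lambda>W. norm (G - W)) ` bouligand (Ssol A) u)) ` Gset A (uk k) (\<Delta> k)) = 0"
    if sub: "Gset A (uk k) (\<Delta> k) \<subseteq> bouligand (Ssol A) u" for k
  proof -
    have "Inf ((\<lambda>W. norm (G - W)) ` bouligand (Ssol A) u) = 0" if "G \<in> Gset A (uk k) (\<Delta> k)" for G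
      using sub that by (intro cInf_eq_minimum) auto
    moreover have "Gset A (uk k) (\<Delta> k) \<noteq> {}" unfolding Gset_def by blast
    ultimately have "(\<lambda>G. Inf ((\<lambda>W. norm (G - W)) ` bouligand (Ssol A) u)) ` Gset A (uk k) (\<Delta> k) = {0}"
      by auto
    then show ?thesis by simp
  qed
  have "eventually (\<lambda>k. Sup ((\<lambda>G. Inf ((\<lambda>W. norm (G - W)) ` bouligand (Ssol A) u)) ` Gset A (uk k) (\<Delta> k)) = 0) sequentially"
    using part1 zero unfolding eventually_sequentially by blast
  then have "(\<lambda>k. Sup ((\<lambda>G. Inf ((\<lambda>W. norm (G - W)) ` bouligand (Ssol A) u)) ` Gset A (uk k) (\<Delta> k))) \<longlonglongrightarrow> 0"
    by (rule tendsto_eventually)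
  then show ?thesis using part1 by blast
qed

end
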